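(* Let $G$ be a connected $d$-regular simple graph of order $n$, where $d\ge 3$, with adjacency eigenvalues $d=\lambda_1>\lambda_2\ge\cdots\ge\lambda_n$. Then \[ \mathscr{K}_e(G)=n(d-1)+\sum_{i=2}^{n}\frac{d}{d-\lambda_i}. \]
   Context: Kemeny's constant of an irreducible finite Markov chain with transition matrix $P$ whose eigenvalues (with multiplicity) are $1=\rho_1,\rho_2,\dots,\rho_N$ (with $1$ simple) is $\mathscr{K}(P)=\sum_{i=2}^{N}\frac{1}{1-\rho_i}$. The edge Kemeny's constant $\mathscr{K}_e(G)$ is Kemeny's constant of the simple random walk on the arcs of $G$: the states are the $2|E(G)|$ arcs $(u,v)$ with $\{u,v\}\in E(G)$, and from arc $(u,v)$ the walk moves to arc $(v,w)$ with probability $1/\deg(v)$ for each neighbor $w$ of $v$ (including $w=u$). *)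

theory Defs
  imports Complex_Main "HOL-Computational_Algebra.Polynomial" "HOL-Combinatorics.Permutations"
begin

definition charpoly :: "'i set \<Rightarrow> ('i \<Rightarrow> 'i \<Rightarrow> complex) \<Rightarrow> complex poly" where
  "charpoly S M = (\<Sum>p | p permutes S. of_int (sign p) *
      (\<Prod>i\<in>S. (if p i = i then [:0, 1:] else 0) - [:M i (p i):]))"

definition eigenvalues :: "'i set \<Rightarrow> ('i \<Rightarrow> 'i \<Rightarrow> complex) \<Rightarrow> complex multiset" where
  "eigenvalues S M = proots (charpoly S M)"

definition kemeny :: "'i set \<Rightarrow> ('i \<Rightarrow> 'i \<Rightarrow> complex) \<Rightarrow> complex" where
  "kemeny S P = (\<Sum>\<rho>\<in># eigenvalues S P - {#1#}. 1 / (1 - \<rho>))"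

definition simple_graph :: "'a set \<Rightarrow> ('a \<Rightarrow> 'a \<Rightarrow> bool) \<Rightarrow> bool" where
  "simple_graph V E \<longleftrightarrow> finite V \<and> (\<forall>u v. E u v \<longrightarrow> u \<in> V \<and> v \<in> V)
     \<and> (\<forall>u v. E u v \<longrightarrow> E v u) \<and> (\<forall>v. \<not> E v v)"

definition degree :: "'a set \<Rightarrow> ('a \<Rightarrow> 'a \<Rightarrow> bool) \<Rightarrow> 'a \<Rightarrow> nat" where
  "degree V E v = card {w \<in> V. E v w}"

definition regular :: "'a set \<Rightarrow> ('a \<Rightarrow> 'a \<Rightarrow> bool) \<Rightarrow> nat \<Rightarrow> bool" where
  "regular V E d \<longleftrightarrow> (\<forall>v\<in>V. degree V E v = d)"

definition connected_graph :: "'a set \<Rightarrow> ('a \<Rightarrow> 'a \<Rightarrow> bool) \<Rightarrow> bool" where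
  "connected_graph V E \<longleftrightarrow> (\<forall>u\<in>V. \<forall>v\<in>V. E\<^sup>*\<^sup>* u v)"

definition adjacency :: "('a \<Rightarrow> 'a \<Rightarrow> bool) \<Rightarrow> 'a \<Rightarrow> 'a \<Rightarrow> complex" where
  "adjacency E u v = (if E u v then 1 else 0)"

text \<open>Arcs (ordered pairs of adjacent vertices) and the simple random walk on arcs:
  from (u,v) move to (v,w) with probability 1/deg v.\<close>
definition arcs :: "'a set \<Rightarrow> ('a \<Rightarrow> 'a \<Rightarrow> bool) \<Rightarrow> ('a \<times> 'a) set" where
  "arcs V E = {(u, v). u \<in> V \<and> v \<in> V \<and> E u v}"

definition arc_walk :: "'a set \<Rightarrow> ('a \<Rightarrow> 'a \<Rightarrow> bool) \<Rightarrow> 'a \<times> 'a \<Rightarrow> 'a \<times> 'a \<Rightarrow> complex" where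
  "arc_walk V E a b = (if snd a = fst b then 1 / of_nat (degree V E (snd a)) else 0)"

definition edge_kemeny :: "'a set \<Rightarrow> ('a \<Rightarrow> 'a \<Rightarrow> bool) \<Rightarrow> complex" where
  "edge_kemeny V E = kemeny (arcs V E) (arc_walk V E)"

end

theory Submission
  imports Defs "Jordan_Normal_Form.Jordan_Normal_Form_Existence"
begin


lemma const_poly_semiring_hom: "semiring_hom (\<lambda>a::complex. [:a:])"
  by unfold_locales (auto simp: one_pCons)

lemma sylvester_char_poly:
  fixes T :: "complex mat" and S :: "complex mat"
  assumes T: "T \<in> carrier_mat N n" and S: "S \<in> carrier_mat n N"
  shows "[:0,1:]^n * char_poly (T * S) = [:0,1:]^N * char_poly (S * T)"
proof -
  let ?X = "[:0,1:] :: complex poly"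
  let ?h = "map_mat (\<lambda>a::complex. [:a:])"
  define T' where "T' = ?h T"
  define S' where "S' = ?h S"
  have T': "T' \<in> carrier_mat N n" and S': "S' \<in> carrier_mat n N" using T S by (auto simp: T'_def S'_def)
  have hTS: "?h (T * S) = T' * S'" unfolding T'_def S'_def
    by (rule semiring_hom.mat_hom_mult[OF const_poly_semiring_hom T S])
  have hST: "?h (S * T) = S' * T'" unfolding T'_def S'_def
    by (rule semiring_hom.mat_hom_mult[OF const_poly_semiring_hom S T])
  have cTS: "char_poly_matrix (T * S) = ?X \<cdot>\<^sub>m 1\<^sub>m N - T' * S'"
    unfolding char_poly_matrix_def hTS[symmetric] using T S
    by (intro eq_matI) auto
  have cST: "char_poly_matrix (S * T) = ?X \<cdot>\<^sub>m 1\<^sub>m n - S' * T'"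
    unfolding char_poly_matrix_def hST[symmetric] using T S
    by (intro eq_matI) auto
  define M where "M = four_block_mat (?X \<cdot>\<^sub>m 1\<^sub>m N) T' S' (1\<^sub>m n)"
  define L1 where "L1 = four_block_mat (1\<^sub>m N) (0\<^sub>m N n) (- S') (1\<^sub>m n)"
  define L2 where "L2 = four_block_mat (1\<^sub>m N) (0\<^sub>m N n) (- S') (?X \<cdot>\<^sub>m 1\<^sub>m n)"
  have M: "M \<in> carrier_mat (N+n) (N+n)" unfolding M_def using T' S' by auto
  have L1: "L1 \<in> carrier_mat (N+n) (N+n)" unfolding L1_def using T' S' by auto
  have L2: "L2 \<in> carrier_mat (N+n) (N+n)" unfolding L2_def using T' S' by auto
  have "M * L1 = four_block_mat (?X \<cdot>\<^sub>m 1\<^sub>m N - T' * S') T' (0\<^sub>m n N) (1\<^sub>m n)"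
    unfolding M_def L1_def
    apply (subst mult_four_block_mat[OF smult_carrier_mat[OF one_carrier_mat] T' S' one_carrier_mat
           one_carrier_mat zero_carrier_mat uminus_carrier_mat[OF S'] one_carrier_mat])
    using T' S' apply auto
    done
  note eq1 = this
  have "det (M * L1) = det (?X \<cdot>\<^sub>m 1\<^sub>m N - T' * S')"
    unfolding eq1 using T' S' by (subst det_four_block_mat_lower_left_zero[of _ N _ n]) auto
  moreover have "det L1 = 1" unfolding L1_def using S'
    by (subst det_four_block_mat_upper_right_zero[of _ N _ n]) auto
  ultimately have d1: "det M = char_poly (T * S)"
    using det_mult[OF M L1] by (simp add: char_poly_def cTS)
  have "L2 * M = four_block_mat (?X \<cdot>\<^sub>m 1\<^sub>m N) T' (0\<^sub>m n N) (?X \<cdot>\<^sub>m 1\<^sub>m n - S' * T')"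
    unfolding M_def L2_def
    apply (subst mult_four_block_mat[OF one_carrier_mat zero_carrier_mat uminus_carrier_mat[OF S']
           smult_carrier_mat[OF one_carrier_mat] smult_carrier_mat[OF one_carrier_mat] T' S' one_carrier_mat])
    using T' S' apply auto
    done
  note eq2 = this
  have "det (L2 * M) = ?X ^ N * det (?X \<cdot>\<^sub>m 1\<^sub>m n - S' * T')"
    unfolding eq2 using T' S' by (subst det_four_block_mat_lower_left_zero[of _ N _ n]) auto
  moreover have "det L2 = ?X ^ n" unfolding L2_def using S'
    by (subst det_four_block_mat_upper_right_zero[of _ N _ n]) auto
  ultimately have "?X ^ n * det M = ?X ^ N * char_poly (S * T)"
    using det_mult[OF L2 M] by (simp add: char_poly_def cST)
  with d1 show ?thesis by simp
qed



lemma charpoly_reindex: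
  assumes g: "bij_betw g {0..<k} S"
  shows "charpoly S M = char_poly (mat k k (\<lambda>(i,j). M (g i) (g j)))"
proof -
  let ?X = "[:0,1:] :: complex poly"
  let ?A = "mat k k (\<lambda>(i,j). M (g i) (g j))"
  let ?F = "\<lambda>q i. (if q i = i then ?X else 0) - [:M i (q i):]"
  let ?phi = "\<lambda>\<pi> x. if x \<in> S then g (\<pi> (inv_into {0..<k} g x)) else x"
  have inj: "inj_on g {0..<k}" using g by (auto simp: bij_betw_def)
  have gim: "g ` {0..<k} = S" using g by (auto simp: bij_betw_def)
  have phi_map: "?phi p = map_permutation {0..<k} g p" for p
    unfolding map_permutation_def restrict_id_def gim by auto
  have "charpoly S M = (\<Sum>q\<in>{q. q permutes S}. of_int (sign q) * (\<Prod>i\<in>S. ?F q i))"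
    unfolding charpoly_def by simp
  also have "\<dots> = (\<Sum>p\<in>{p. p permutes {0..<k}}. of_int (sign (?phi p)) * (\<Prod>i\<in>S. ?F (?phi p) i))"
    by (rule sum.reindex_bij_betw[OF bij_betw_permutations[OF g], symmetric])
  also have "\<dots> = (\<Sum>p\<in>{p. p permutes {0..<k}}. signof p * (\<Prod>i=0..<k. char_poly_matrix ?A $$ (i, p i)))"
  proof (rule sum.cong[OF refl])
    fix p assume p: "p \<in> {p. p permutes {0..<k}}"
    hence p: "p permutes {0..<k}" by simp
    have s: "sign (?phi p) = sign p" unfolding phi_map
      by (rule sign_map_permutation[OF inj p]) simp
    have "(\<Prod>i\<in>S. ?F (?phi p) i) = (\<Prod>i\<in>{0..<k}. ?F (?phi p) (g i))"
      by (rule prod.reindex_bij_betw[OF g, symmetric])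
    also have "\<dots> = (\<Prod>i=0..<k. char_poly_matrix ?A $$ (i, p i))"
    proof (rule prod.cong[OF refl])
      fix i assume i: "i \<in> {0..<k}"
      have pi: "p i \<in> {0..<k}" using p i by (simp add: permutes_in_image)
      have ap: "?phi p (g i) = g (p i)" using inj i gim by (auto simp: inv_into_f_f)
      have eq: "g (p i) = g i \<longleftrightarrow> p i = i" using inj i pi by (auto dest: inj_onD)
      show "?F (?phi p) (g i) = char_poly_matrix ?A $$ (i, p i)"
        unfolding ap using i pi eq by (auto simp: char_poly_matrix_def)
    qed
    finally show "of_int (sign (?phi p)) * (\<Prod>i\<in>S. ?F (?phi p) i) =
        signof p * (\<Prod>i=0..<k. char_poly_matrix ?A $$ (i, p i))" using s by simp
  qed
  also have "\<dots> = char_poly ?A"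
    unfolding char_poly_def by (rule det_def'[symmetric]) simp
  finally show ?thesis .
qed



lemma count_image_mset_inj':
  assumes "inj f" shows "count (image_mset f M) (f x) = count M x"
proof -
  have "f -` {f x} = {x}" using assms by (auto dest: injD)
  then show ?thesis by (cases "x \<in># M") (auto simp: count_image_mset not_in_iff)
qed

lemma proots_scale:
  fixes A :: "complex mat" and c :: complex
  assumes A: "A \<in> carrier_mat n n" and c: "c \<noteq> 0"
  shows "proots (char_poly ((1/c) \<cdot>\<^sub>m A)) = image_mset (\<lambda>x. x / c) (proots (char_poly A))"
proof (rule multiset_eqI)
  fix x :: complex
  have nz1: "char_poly ((1/c) \<cdot>\<^sub>m A) \<noteq> 0"
    using degree_monic_char_poly[of "(1/c) \<cdot>\<^sub>m A" n] A by auto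
  have nz2: "char_poly A \<noteq> 0"
    using degree_monic_char_poly[OF A] by auto
  have inj: "inj (\<lambda>x::complex. x / c)" using c by (auto intro: injI)
  have "count (proots (char_poly ((1/c) \<cdot>\<^sub>m A))) x = order (x * c) (char_poly A)"
    using order_char_poly_smult[OF A, of "1/c" x] c nz1 by simp
  also have "\<dots> = count (image_mset (\<lambda>x. x / c) (proots (char_poly A))) ((x * c) / c)"
    using count_image_mset_inj'[OF inj, of "proots (char_poly A)" "x * c"] nz2 by simp
  finally show "count (proots (char_poly ((1/c) \<cdot>\<^sub>m A))) x =
      count (image_mset (\<lambda>x. x / c) (proots (char_poly A))) x" using c by simp
qed

lemma proots_cancel:
  fixes p q :: "complex poly"
  assumes "[:0,1:]^n * p = [:0,1:]^N * q" "p \<noteq> 0" "q \<noteq> 0" "n \<le> N"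
  shows "proots p = replicate_mset (N - n) 0 + proots q"
proof -
  have X: "proots ([:0,1:] :: complex poly) = {#0#}"
    using proots_linear_factor[of "0::complex"] by simp
  have "proots ([:0,1:]^n * p) = proots ([:0,1:]^N * q)" using assms(1) by simp
  hence "replicate_mset n 0 + proots p = replicate_mset N 0 + proots q"
    using assms(2,3) by (simp add: proots_mult proots_power X)
  also have "replicate_mset N (0::complex) = replicate_mset n 0 + replicate_mset (N - n) 0"
    using assms(4) by (simp add: multiset_eq_iff)
  finally show ?thesis by (simp add: add.assoc)
qed



theorem lemma3p1:
  fixes V :: "'a set" and E :: "'a \<Rightarrow> 'a \<Rightarrow> bool" and d :: nat
  assumes "simple_graph V E" and "connected_graph V E" and "regular V E d" and "d \<ge> 3"
  shows "edge_kemeny V E =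
    of_nat (card V) * (of_nat d - 1) +
    (\<Sum>mu\<in># eigenvalues V (adjacency E) - {#of_nat d#}. of_nat d / (of_nat d - mu))"
proof -
  note sg = assms(1)[unfolded simple_graph_def]
  have finV: "finite V" using sg by blast
  have Evw: "E u v \<Longrightarrow> u \<in> V \<and> v \<in> V" for u v using sg by blast
  have deg: "v \<in> V \<Longrightarrow> degree V E v = d" for v using assms(3) by (auto simp: regular_def)
  define dc where "dc = (of_nat d :: complex)"
  have dc0: "dc \<noteq> 0" using assms(4) by (simp add: dc_def)
  define n where "n = card V"
  define Ar where "Ar = arcs V E"
  have Ar_Sigma: "Ar = Sigma V (\<lambda>u. {w\<in>V. E u w})" by (auto simp: Ar_def arcs_def)
  have finAr: "finite Ar" unfolding Ar_Sigma using finV by auto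
  define N where "N = card Ar"
  have N: "N = n * d" unfolding N_def Ar_Sigma n_def using finV deg
    by (simp add: degree_def)
  have inAr: "a \<in> Ar \<longleftrightarrow> fst a \<in> V \<and> snd a \<in> V \<and> E (fst a) (snd a)" for a
    by (cases a) (auto simp: Ar_def arcs_def)
  obtain gv where gv: "bij_betw gv {0..<n} V" using ex_bij_betw_nat_finite[OF finV] n_def by blast
  obtain ga where ga: "bij_betw ga {0..<N} Ar" using ex_bij_betw_nat_finite[OF finAr] N_def by blast
  have gvV: "i < n \<Longrightarrow> gv i \<in> V" for i using gv by (auto simp: bij_betw_def)
  have gaA: "i < N \<Longrightarrow> ga i \<in> Ar" for i using ga by (auto simp: bij_betw_def)
  define Tm where "Tm = mat N n (\<lambda>(i,j). if snd (ga i) = gv j then 1/dc else 0)"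
  define Sm where "Sm = mat n N (\<lambda>(i,j). if fst (ga j) = gv i then 1 else (0::complex))"
  define Am where "Am = mat n n (\<lambda>(i,j). adjacency E (gv i) (gv j))"
  define Pm where "Pm = mat N N (\<lambda>(i,j). arc_walk V E (ga i) (ga j))"
  have Tm: "Tm \<in> carrier_mat N n" and Sm: "Sm \<in> carrier_mat n N" and Am: "Am \<in> carrier_mat n n"
    by (auto simp: Tm_def Sm_def Am_def)
  have PTS: "Pm = Tm * Sm"
  proof (rule eq_matI)
    fix i j assume i: "i < dim_row (Tm * Sm)" and j: "j < dim_col (Tm * Sm)"
    hence i: "i < N" and j: "j < N" using Tm Sm by auto
    have sV: "snd (ga i) \<in> V" using gaA[OF i] inAr by blast
    have "(Tm * Sm) $$ (i, j) = (\<Sum>l\<in>{0..<n}. (if snd (ga i) = gv l then 1/dc else 0) *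
             (if fst (ga j) = gv l then 1 else 0))"
      using i j by (simp add: Tm_def Sm_def scalar_prod_def)
    also have "\<dots> = (\<Sum>x\<in>V. (if snd (ga i) = x then 1/dc else 0) * (if fst (ga j) = x then 1 else 0))"
      by (rule sum.reindex_bij_betw[OF gv])
    also have "\<dots> = (\<Sum>x\<in>V. if x = snd (ga i) then (if fst (ga j) = x then 1/dc else 0) else 0)"
      by (rule sum.cong) auto
    also have "\<dots> = (if snd (ga i) = fst (ga j) then 1/dc else 0)"
      using finV sV by (simp add: sum.delta)
    also have "\<dots> = Pm $$ (i, j)"
      using i j sV deg[OF sV] by (auto simp: Pm_def arc_walk_def dc_def)
    finally show "Pm $$ (i, j) = (Tm * Sm) $$ (i, j)" by simp
  qed (auto simp: Pm_def Tm_def Sm_def)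
  have STA: "Sm * Tm = (1/dc) \<cdot>\<^sub>m Am"
  proof (rule eq_matI)
    fix i j assume i: "i < dim_row ((1/dc) \<cdot>\<^sub>m Am)" and j: "j < dim_col ((1/dc) \<cdot>\<^sub>m Am)"
    hence i: "i < n" and j: "j < n" using Am by auto
    have "(Sm * Tm) $$ (i, j) = (\<Sum>l\<in>{0..<N}. (if fst (ga l) = gv i then 1 else 0) *
             (if snd (ga l) = gv j then 1/dc else 0))"
      using i j by (simp add: Tm_def Sm_def scalar_prod_def)
    also have "\<dots> = (\<Sum>a\<in>Ar. (if fst a = gv i then 1 else 0) * (if snd a = gv j then 1/dc else 0))"
      by (rule sum.reindex_bij_betw[OF ga])
    also have "\<dots> = (\<Sum>a\<in>Ar. if a = (gv i, gv j) then 1/dc else 0)"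
      by (rule sum.cong) auto
    also have "\<dots> = (if (gv i, gv j) \<in> Ar then 1/dc else 0)"
      using finAr by (simp add: sum.delta')
    also have "\<dots> = ((1/dc) \<cdot>\<^sub>m Am) $$ (i, j)"
      using i j gvV inAr by (simp add: Am_def adjacency_def)
    finally show "(Sm * Tm) $$ (i, j) = ((1/dc) \<cdot>\<^sub>m Am) $$ (i, j)" .
  qed (auto simp: Am_def Tm_def Sm_def)
  have cP: "charpoly Ar (arc_walk V E) = char_poly (Tm * Sm)"
    unfolding PTS[symmetric] Pm_def by (rule charpoly_reindex[OF ga])
  have cA: "charpoly V (adjacency E) = char_poly Am"
    unfolding Am_def by (rule charpoly_reindex[OF gv])
  have syl: "[:0,1:]^n * char_poly (Tm * Sm) = [:0,1:]^N * char_poly ((1/dc) \<cdot>\<^sub>m Am)"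
    using sylvester_char_poly[OF Tm Sm] STA by simp
  have nz1: "char_poly (Tm * Sm) \<noteq> 0"
    using degree_monic_char_poly[of "Tm * Sm" N] Tm Sm by auto
  have nz2: "char_poly ((1/dc) \<cdot>\<^sub>m Am) \<noteq> 0"
    using degree_monic_char_poly[of "(1/dc) \<cdot>\<^sub>m Am" n] Am by auto
  have nN: "n \<le> N" using N assms(4) by simp
  define MA where "MA = eigenvalues V (adjacency E)"
  define f where "f = (\<lambda>x::complex. x / dc)"
  define Z where "Z = replicate_mset (N - n) (0::complex)"
  have eigP: "eigenvalues Ar (arc_walk V E) = Z + image_mset f MA"
    unfolding eigenvalues_def cP MA_def cA Z_def f_def
    using proots_cancel[OF syl nz1 nz2 nN] proots_scale[OF Am dc0] by simp
  have f1: "f dc = 1" using dc0 by (simp add: f_def)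
  have diff: "(Z + image_mset f MA) - {#1#} = Z + image_mset f (MA - {#dc#})"
  proof (cases "dc \<in># MA")
    case True
    then have "MA = add_mset dc (MA - {#dc#})" by simp
    then have "image_mset f MA = add_mset 1 (image_mset f (MA - {#dc#}))"
      using f1 by (metis image_mset_add_mset)
    then show ?thesis by simp
  next
    case False
    have "1 \<notin># Z + image_mset f MA"
    proof
      assume "1 \<in># Z + image_mset f MA"
      then obtain y where "y \<in># MA" "f y = 1" by (auto simp: Z_def split: if_splits)
      then have "y = dc" using dc0 by (auto simp: f_def field_simps)
      with False \<open>y \<in># MA\<close> show False by simp
    qed
    then show ?thesis using False by (simp add: diff_single_trivial)
  qed
  have termeq: "1 / (1 - f mu) = dc / (dc - mu)" for mu
  proof (cases "mu = dc")
    case True then show ?thesis using f1 by simp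
  next
    case False
    then have "dc - mu \<noteq> 0" by simp
    then show ?thesis using dc0 by (simp add: f_def field_simps)
  qed
  have "edge_kemeny V E = (\<Sum>\<rho>\<in># Z + image_mset f (MA - {#dc#}). 1 / (1 - \<rho>))"
    unfolding edge_kemeny_def kemeny_def Ar_def[symmetric] eigP diff ..
  also have "\<dots> = of_nat (N - n) + (\<Sum>mu\<in># MA - {#dc#}. dc / (dc - mu))"
    by (simp add: Z_def image_mset.compositionality o_def termeq)
  also have "of_nat (N - n) = (of_nat n * (dc - 1) :: complex)"
    using nN N by (simp add: of_nat_diff dc_def algebra_simps)
  finally show ?thesis by (simp add: n_def MA_def dc_def)
qed

end
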